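(* Let $X$ be a compact metric space and $f\colon X\to X$ a homeomorphism with the L-shadowing property. Then $f$ has the shadowing property and admits only finitely many chain recurrent classes.
   Context: A $\delta$-pseudo orbit is $(x_k)_{k\in\mathbb{Z}}$ with $d(f(x_k),x_{k+1})<\delta$ for all $k$; a two-sided limit pseudo orbit satisfies $d(f(x_k),x_{k+1})\to0$ as $|k|\to\infty$. $z$ $\varepsilon$-shadows $(x_k)$ if $d(f^k(z),x_k)<\varepsilon$ for all $k$, and two-sided limit shadows it if $d(f^k(z),x_k)\to0$ as $|k|\to\infty$. $f$ has the L-shadowing property if for every $\varepsilon>0$ there is $\delta>0$ such that every $\delta$-pseudo orbit that is also a two-sided limit pseudo orbit is both $\varepsilon$-shadowed and two-sided limit shadowed by one and the same point. $f$ has the shadowing property if for every $\varepsilon>0$ there is $\delta>0$ such that every $\delta$-pseudo orbit is $\varepsilon$-shadowed by some point. A point $x$ is chain recurrent if for each $\varepsilon>0$ there is a nontrivial finite $\varepsilon$-pseudo orbit from $x$ to $x$; the chain recurrent class of $x$ is the set of $y$ such that for every $\varepsilon>0$ some periodic $\varepsilon$-pseudo orbit contains both $x$ and $y$. *)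

theory Defs
  imports "HOL-Analysis.Analysis"
begin

definition pseudo_orbit :: "'a::metric_space set \<Rightarrow> ('a \<Rightarrow> 'a) \<Rightarrow> real \<Rightarrow> (int \<Rightarrow> 'a) \<Rightarrow> bool" where
  "pseudo_orbit X f \<delta> xs \<longleftrightarrow> (\<forall>k. xs k \<in> X) \<and> (\<forall>k. dist (f (xs k)) (xs (k+1)) < \<delta>)"

definition two_sided_limit_pseudo_orbit :: "'a::metric_space set \<Rightarrow> ('a \<Rightarrow> 'a) \<Rightarrow> (int \<Rightarrow> 'a) \<Rightarrow> bool" where
  "two_sided_limit_pseudo_orbit X f xs \<longleftrightarrow> (\<forall>k. xs k \<in> X) \<and>
     ((\<lambda>k. dist (f (xs k)) (xs (k+1))) \<longlongrightarrow> 0) at_top \<and>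
     ((\<lambda>k. dist (f (xs k)) (xs (k+1))) \<longlongrightarrow> 0) at_bot"

text \<open>Integer iterates of a homeomorphism f with inverse g.\<close>
definition iter_int :: "('a \<Rightarrow> 'a) \<Rightarrow> ('a \<Rightarrow> 'a) \<Rightarrow> int \<Rightarrow> 'a \<Rightarrow> 'a" where
  "iter_int f g k = (if k \<ge> 0 then (f ^^ nat k) else (g ^^ nat (- k)))"

definition eps_shadows :: "('a::metric_space \<Rightarrow> 'a) \<Rightarrow> ('a \<Rightarrow> 'a) \<Rightarrow> real \<Rightarrow> 'a \<Rightarrow> (int \<Rightarrow> 'a) \<Rightarrow> bool" where
  "eps_shadows f g \<epsilon> z xs \<longleftrightarrow> (\<forall>k. dist (iter_int f g k z) (xs k) < \<epsilon>)"

definition limit_shadows :: "('a::metric_space \<Rightarrow> 'a) \<Rightarrow> ('a \<Rightarrow> 'a) \<Rightarrow> 'a \<Rightarrow> (int \<Rightarrow> 'a) \<Rightarrow> bool" where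
  "limit_shadows f g z xs \<longleftrightarrow>
     ((\<lambda>k. dist (iter_int f g k z) (xs k)) \<longlongrightarrow> 0) at_top \<and>
     ((\<lambda>k. dist (iter_int f g k z) (xs k)) \<longlongrightarrow> 0) at_bot"

definition L_shadowing :: "'a::metric_space set \<Rightarrow> ('a \<Rightarrow> 'a) \<Rightarrow> ('a \<Rightarrow> 'a) \<Rightarrow> bool" where
  "L_shadowing X f g \<longleftrightarrow> (\<forall>\<epsilon>>0. \<exists>\<delta>>0. \<forall>xs.
     pseudo_orbit X f \<delta> xs \<and> two_sided_limit_pseudo_orbit X f xs \<longrightarrow>
     (\<exists>z\<in>X. eps_shadows f g \<epsilon> z xs \<and> limit_shadows f g z xs))"

definition shadowing :: "'a::metric_space set \<Rightarrow> ('a \<Rightarrow> 'a) \<Rightarrow> ('a \<Rightarrow> 'a) \<Rightarrow> bool" where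
  "shadowing X f g \<longleftrightarrow> (\<forall>\<epsilon>>0. \<exists>\<delta>>0. \<forall>xs.
     pseudo_orbit X f \<delta> xs \<longrightarrow> (\<exists>z\<in>X. eps_shadows f g \<epsilon> z xs))"

definition finite_pseudo_orbit :: "'a::metric_space set \<Rightarrow> ('a \<Rightarrow> 'a) \<Rightarrow> real \<Rightarrow> (nat \<Rightarrow> 'a) \<Rightarrow> nat \<Rightarrow> bool" where
  "finite_pseudo_orbit X f \<epsilon> p n \<longleftrightarrow> (\<forall>i\<le>n. p i \<in> X) \<and> (\<forall>i<n. dist (f (p i)) (p (Suc i)) < \<epsilon>)"

definition chain_recurrent :: "'a::metric_space set \<Rightarrow> ('a \<Rightarrow> 'a) \<Rightarrow> 'a \<Rightarrow> bool" where
  "chain_recurrent X f x \<longleftrightarrow> x \<in> X \<and> (\<forall>\<epsilon>>0. \<exists>p n. n > 0 \<and> finite_pseudo_orbit X f \<epsilon> p n \<and> p 0 = x \<and> p n = x)"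

definition periodic_pseudo_orbit :: "'a::metric_space set \<Rightarrow> ('a \<Rightarrow> 'a) \<Rightarrow> real \<Rightarrow> (int \<Rightarrow> 'a) \<Rightarrow> bool" where
  "periodic_pseudo_orbit X f \<epsilon> xs \<longleftrightarrow> pseudo_orbit X f \<epsilon> xs \<and> (\<exists>n::int>0. \<forall>k. xs (k + n) = xs k)"

definition chain_class :: "'a::metric_space set \<Rightarrow> ('a \<Rightarrow> 'a) \<Rightarrow> 'a \<Rightarrow> 'a set" where
  "chain_class X f x = {y \<in> X. \<forall>\<epsilon>>0. \<exists>xs. periodic_pseudo_orbit X f \<epsilon> xs \<and> x \<in> range xs \<and> y \<in> range xs}"

definition chain_recurrent_classes :: "'a::metric_space set \<Rightarrow> ('a \<Rightarrow> 'a) \<Rightarrow> 'a set set" where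
  "chain_recurrent_classes X f = chain_class X f ` {x. chain_recurrent X f x}"

end

theory Submission
  imports Defs
begin

lemma funpow_in: "f ` X \<subseteq> X \<Longrightarrow> w \<in> X \<Longrightarrow> (f ^^ n) w \<in> X"
  by (induction n) auto

lemma iter_in:
  assumes "homeomorphism X X f g" "w \<in> X"
  shows "iter_int f g k w \<in> X"
proof -
  have "f ` X \<subseteq> X" "g ` X \<subseteq> X" using assms(1) unfolding homeomorphism_def by auto
  thus ?thesis using assms(2) funpow_in unfolding iter_int_def by auto
qed

lemma iter_succ:
  assumes "homeomorphism X X f g" "w \<in> X"
  shows "f (iter_int f g k w) = iter_int f g (k+1) w"
proof -
  have gX: "g ` X \<subseteq> X" and fg: "\<forall>y\<in>X. f (g y) = y" using assms(1) unfolding homeomorphism_def by auto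
  consider "k \<ge> 0" | "k = -1" | "k \<le> -2" by linarith
  then show ?thesis
  proof cases
    case 1
    then have "nat (k+1) = Suc (nat k)" by simp
    then show ?thesis using 1 unfolding iter_int_def by simp
  next
    case 2 then show ?thesis unfolding iter_int_def using fg assms(2) by simp
  next
    case 3
    then have e: "nat (-k) = Suc (nat (-(k+1)))" by simp
    have "(g ^^ nat (-(k+1))) w \<in> X" using funpow_in[OF gX assms(2)] .
    then show ?thesis using 3 e fg unfolding iter_int_def by simp
  qed
qed

lemma iter_zero[simp]: "iter_int f g 0 = id"
  unfolding iter_int_def by simp

lemma funpow_cont: "continuous_on X f \<Longrightarrow> f ` X \<subseteq> X \<Longrightarrow> continuous_on X (f ^^ n)"
proof (induction n)
  case 0 then show ?case by (simp add: continuous_on_id)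
next
  case (Suc n)
  have "continuous_on X (f \<circ> (f ^^ n))"
  proof (rule continuous_on_compose)
    show "continuous_on X (f ^^ n)" using Suc by simp
    have "(f ^^ n) ` X \<subseteq> X" using Suc.prems funpow_in[of f X] by (simp add: image_subset_iff)
    then show "continuous_on ((f ^^ n) ` X) f" by (rule continuous_on_subset[OF Suc.prems(1)])
  qed
  then show ?case by simp
qed

lemma iter_cont:
  assumes "homeomorphism X X f g"
  shows "continuous_on X (iter_int f g k)"
proof -
  have "f ` X \<subseteq> X" "g ` X \<subseteq> X" "continuous_on X f" "continuous_on X g"
    using assms(1) unfolding homeomorphism_def by auto
  thus ?thesis unfolding iter_int_def using funpow_cont[of X f] funpow_cont[of X g] by simp
qed

lemma L_imp_shadowing:
  assumes cX: "compact X" and hom: "homeomorphism X X f g" and L: "L_shadowing X f g"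
  shows "shadowing X f g"
  unfolding shadowing_def
proof (intro allI impI)
  fix \<epsilon> :: real assume "\<epsilon> > 0"
  then have "\<epsilon>/2 > 0" by simp
  then obtain \<delta> where d0: "\<delta> > 0" and dL: "\<And>xs. pseudo_orbit X f \<delta> xs \<Longrightarrow> two_sided_limit_pseudo_orbit X f xs \<Longrightarrow>
     (\<exists>z\<in>X. eps_shadows f g (\<epsilon>/2) z xs \<and> limit_shadows f g z xs)"
    using L unfolding L_shadowing_def by blast
  show "\<exists>\<delta>>0. \<forall>xs. pseudo_orbit X f \<delta> xs \<longrightarrow> (\<exists>z\<in>X. eps_shadows f g \<epsilon> z xs)"
  proof (intro exI conjI allI impI)
    show "\<delta> > 0" by fact
    fix xs assume po: "pseudo_orbit X f \<delta> xs"
    have xsX: "\<And>k. xs k \<in> X" and xsd: "\<And>k. dist (f (xs k)) (xs (k+1)) < \<delta>"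
      using po unfolding pseudo_orbit_def by auto
    define ys where "ys M k = (if k \<ge> int M then iter_int f g (k - int M) (xs (int M))
        else if k \<le> - int M then iter_int f g (k + int M) (xs (- int M)) else xs k)" for M :: nat and k
    have ys1: "ys M k = xs k" if kM: "\<bar>k\<bar> \<le> int M" for M k
    proof -
      consider "k = int M" | "k = - int M" | "\<not> k \<ge> int M \<and> \<not> k \<le> - int M" using kM unfolding abs_le_iff by linarith
      then show ?thesis
      proof cases
        case 1 then show ?thesis unfolding ys_def by simp
      next
        case 2 then show ?thesis unfolding ys_def by (cases "M = 0") auto
      next
        case 3 then show ?thesis unfolding ys_def by simp
      qed
    qed
    have ys2: "ys M k = iter_int f g (k - int M) (xs (int M))" if "k \<ge> int M" for M k
      using that unfolding ys_def by auto
    have ys3: "ys M k = iter_int f g (k + int M) (xs (- int M))" if kM: "k \<le> - int M" for M k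
    proof (cases "k \<ge> int M")
      case True
      then have "k = 0" "M = 0" using kM by auto
      then show ?thesis unfolding ys_def by simp
    next
      case False
      then show ?thesis using kM unfolding ys_def by simp
    qed
    have ysX: "ys M k \<in> X" for M k
      unfolding ys_def using iter_in[OF hom] xsX by auto
    have step0: "f (ys M k) = ys M (k+1)" if "k \<ge> int M \<or> k < - int M" for M k
    proof (cases "k \<ge> int M")
      case True
      then show ?thesis using ys2[of M k] ys2[of M "k+1"] iter_succ[OF hom xsX]
        by (simp add: algebra_simps)
    next
      case False
      then have "k < - int M" using that by simp
      then show ?thesis using ys3[of k M] ys3[of "k+1" M] iter_succ[OF hom xsX]
        by (simp add: algebra_simps)
    qed
    have poy: "pseudo_orbit X f \<delta> (ys M)" for M
      unfolding pseudo_orbit_def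
    proof (intro conjI allI)
      fix k show "ys M k \<in> X" by (rule ysX)
      show "dist (f (ys M k)) (ys M (k+1)) < \<delta>"
      proof (cases "k \<ge> int M \<or> k < - int M")
        case True then show ?thesis using step0 d0 by simp
      next
        case False
        then have "\<bar>k\<bar> \<le> int M" "\<bar>k+1\<bar> \<le> int M" by auto
        then show ?thesis using ys1 xsd by simp
      qed
    qed
    have limy: "two_sided_limit_pseudo_orbit X f (ys M)" for M
      unfolding two_sided_limit_pseudo_orbit_def
    proof (intro conjI allI)
      fix k show "ys M k \<in> X" by (rule ysX)
    next
      have "eventually (\<lambda>k. dist (f (ys M k)) (ys M (k+1)) = 0) at_top"
        using eventually_ge_at_top[of "int M"] by eventually_elim (simp add: step0)
      then show "((\<lambda>k. dist (f (ys M k)) (ys M (k+1))) \<longlongrightarrow> 0) at_top" by (rule tendsto_eventually)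
    next
      have "eventually (\<lambda>k. dist (f (ys M k)) (ys M (k+1)) = 0) at_bot"
        by (rule eventually_at_bot_linorderI[of "- int M - 1"]) (simp add: step0)
      then show "((\<lambda>k. dist (f (ys M k)) (ys M (k+1))) \<longlongrightarrow> 0) at_bot" by (rule tendsto_eventually)
    qed
    have "\<forall>M. \<exists>z. z \<in> X \<and> eps_shadows f g (\<epsilon>/2) z (ys M)"
      using dL[OF poy limy] by blast
    then obtain zs where zsX: "\<And>M. zs M \<in> X" and zsh: "\<And>M. eps_shadows f g (\<epsilon>/2) (zs M) (ys M)"
      by metis
    have close: "dist (iter_int f g k (zs M)) (xs k) < \<epsilon>/2" if "\<bar>k\<bar> \<le> int M" for k M
      using zsh[of M] ys1[OF that] unfolding eps_shadows_def by metis
    have "seq_compact X" using cX compact_imp_seq_compact by blast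
    then obtain z r where zX: "z \<in> X" and r: "strict_mono r" and lim: "(zs \<circ> r) \<longlonglongrightarrow> z"
      unfolding seq_compact_def using zsX by metis
    show "\<exists>z\<in>X. eps_shadows f g \<epsilon> z xs"
    proof (intro bexI[OF _ zX])
      show "eps_shadows f g \<epsilon> z xs" unfolding eps_shadows_def
      proof
        fix k
        have "(\<lambda>j. iter_int f g k ((zs \<circ> r) j)) \<longlonglongrightarrow> iter_int f g k z"
          by (rule continuous_on_tendsto_compose[OF iter_cont[OF hom] lim zX]) (simp add: zsX)
        then have t: "(\<lambda>j. dist (iter_int f g k ((zs \<circ> r) j)) (xs k)) \<longlonglongrightarrow> dist (iter_int f g k z) (xs k)"
          by (intro tendsto_intros)
        have "eventually (\<lambda>j. dist (iter_int f g k ((zs \<circ> r) j)) (xs k) \<le> \<epsilon>/2) sequentially"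
        proof (rule eventually_sequentiallyI[of "nat \<bar>k\<bar>"])
          fix j assume "nat \<bar>k\<bar> \<le> j"
          then have "\<bar>k\<bar> \<le> int (r j)" using seq_suble[OF r, of j] by linarith
          then show "dist (iter_int f g k ((zs \<circ> r) j)) (xs k) \<le> \<epsilon>/2"
            using close by (simp add: less_imp_le)
        qed
        then have "dist (iter_int f g k z) (xs k) \<le> \<epsilon>/2"
          by (rule tendsto_upperbound[OF t]) simp
        then show "dist (iter_int f g k z) (xs k) < \<epsilon>" using \<open>\<epsilon> > 0\<close> by simp
      qed
    qed
  qed
qed

definition chainR :: "'a::metric_space set \<Rightarrow> ('a \<Rightarrow> 'a) \<Rightarrow> 'a \<Rightarrow> 'a \<Rightarrow> bool" where
  "chainR X f x y \<longleftrightarrow> (\<forall>\<epsilon>>0. \<exists>p n. n > 0 \<and> finite_pseudo_orbit X f \<epsilon> p n \<and> p 0 = x \<and> p n = y)"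

lemma fpo_concat:
  assumes "finite_pseudo_orbit X f \<epsilon> p n" "finite_pseudo_orbit X f \<epsilon> q m" "p n = q 0"
  shows "finite_pseudo_orbit X f \<epsilon> (\<lambda>i. if i \<le> n then p i else q (i - n)) (n+m)"
  unfolding finite_pseudo_orbit_def
proof (intro conjI allI impI)
  fix i assume "i \<le> n + m"
  then show "(if i \<le> n then p i else q (i - n)) \<in> X" using assms(1,2) unfolding finite_pseudo_orbit_def by auto
next
  fix i assume i: "i < n + m"
  consider "i < n" | "i = n" | "i > n" by linarith
  then show "dist (f (if i \<le> n then p i else q (i - n))) (if Suc i \<le> n then p (Suc i) else q (Suc i - n)) < \<epsilon>"
  proof cases
    case 1 then show ?thesis using assms(1) unfolding finite_pseudo_orbit_def by auto
  next
    case 2 then have "0 < m" using i by simp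
    then show ?thesis using 2 assms(2,3) unfolding finite_pseudo_orbit_def by auto
  next
    case 3 then have "i - n < m" "Suc i - n = Suc (i - n)" using i by auto
    then show ?thesis using 3 assms(2) unfolding finite_pseudo_orbit_def by auto
  qed
qed

lemma chainR_trans:
  assumes "chainR X f x y" "chainR X f y w" shows "chainR X f x w"
  unfolding chainR_def
proof (intro allI impI)
  fix \<epsilon> :: real assume e: "\<epsilon> > 0"
  obtain p n where p: "n > 0" "finite_pseudo_orbit X f \<epsilon> p n" "p 0 = x" "p n = y"
    using assms(1) e unfolding chainR_def by blast
  obtain q m where q: "m > 0" "finite_pseudo_orbit X f \<epsilon> q m" "q 0 = y" "q m = w"
    using assms(2) e unfolding chainR_def by blast
  show "\<exists>p n. n > 0 \<and> finite_pseudo_orbit X f \<epsilon> p n \<and> p 0 = x \<and> p n = w"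
    apply (rule exI[of _ "\<lambda>i. if i \<le> n then p i else q (i - n)"], rule exI[of _ "n+m"])
    using fpo_concat[OF p(2) q(2)] p q by auto
qed

lemma periodic_nat: fixes xs :: "int \<Rightarrow> 'a" and N :: int assumes "\<And>k. xs (k + N) = xs k" shows "xs (k + N * int j) = xs k"
proof (induction j arbitrary: k)
  case 0 then show ?case by simp
next
  case (Suc j)
  have "k + N * int (Suc j) = (k + N * int j) + N" by (simp add: algebra_simps)
  then have "xs (k + N * int (Suc j)) = xs (k + N * int j)" using assms[of "k + N * int j"] by metis
  then show ?case using Suc by simp
qed

lemma periodic_int: fixes xs :: "int \<Rightarrow> 'a" and N j :: int assumes "\<And>k. xs (k + N) = xs k" shows "xs (k + N * j) = xs k"
proof (cases "j \<ge> 0")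
  case True then show ?thesis using periodic_nat[of xs N, OF assms, of k "nat j"] by simp
next
  case False
  have "xs (k + N * j + N * int (nat (-j))) = xs (k + N * j)" by (rule periodic_nat[of xs N, OF assms])
  moreover have "k + N * j + N * int (nat (-j)) = k" using False by (simp add: algebra_simps)
  ultimately show ?thesis by metis
qed

lemma periodic_chain:
  assumes "periodic_pseudo_orbit X f \<epsilon> xs"
  shows "\<exists>p n. n > 0 \<and> finite_pseudo_orbit X f \<epsilon> p n \<and> p 0 = xs a \<and> p n = xs b"
proof -
  obtain N where N: "N > 0" "\<And>k. xs (k + N) = xs k" using assms unfolding periodic_pseudo_orbit_def by blast
  have po: "\<And>k. xs k \<in> X" "\<And>k. dist (f (xs k)) (xs (k+1)) < \<epsilon>"
    using assms unfolding periodic_pseudo_orbit_def pseudo_orbit_def by auto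
  define b' where "b' = a + 1 + (b - a - 1) mod N"
  have b'a: "b' - a \<ge> 1" unfolding b'_def using pos_mod_sign[OF N(1), of "b - a - 1"] by linarith
  define d where "d = (b - a - 1) div N"
  have "(b - a - 1) div N * N + (b - a - 1) mod N = b - a - 1" by (rule div_mult_mod_eq)
  then have "b' = b - d * N" unfolding b'_def d_def by linarith
  then have "b' = b + N * (- d)" by (simp add: algebra_simps)
  then have xb: "xs b' = xs b" using periodic_int[of xs N, OF N(2), of b "- d"] by metis
  define p where "p i = xs (a + int i)" for i
  have "finite_pseudo_orbit X f \<epsilon> p (nat (b' - a))"
    unfolding finite_pseudo_orbit_def p_def
  proof (intro conjI allI impI)
    fix i show "xs (a + int i) \<in> X" by (rule po(1))
    have "a + int (Suc i) = (a + int i) + 1" by simp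
    then show "dist (f (xs (a + int i))) (xs (a + int (Suc i))) < \<epsilon>" using po(2)[of "a + int i"] by metis
  qed
  moreover have "p (nat (b' - a)) = xs b" unfolding p_def using b'a xb by simp
  moreover have "p 0 = xs a" unfolding p_def by simp
  moreover have "nat (b' - a) > 0" using b'a by simp
  ultimately show ?thesis by (intro exI[of _ p] exI[of _ "nat (b' - a)"] conjI)
qed

lemma chainR_X: assumes "chainR X f x y" shows "x \<in> X \<and> y \<in> X"
proof -
  have "\<exists>p n. n > 0 \<and> finite_pseudo_orbit X f 1 p n \<and> p 0 = x \<and> p n = y"
    using assms unfolding chainR_def by simp
  then obtain p n where pn: "finite_pseudo_orbit X f 1 p n" "p 0 = x" "p n = y" by blast
  have "p 0 \<in> X" "p n \<in> X" using pn(1) unfolding finite_pseudo_orbit_def by simp_all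
  then show ?thesis using pn by simp
qed

lemma class_char: "chain_class X f x = {y. chainR X f x y \<and> chainR X f y x}"
proof (intro equalityI subsetI)
  fix y assume "y \<in> chain_class X f x"
  then have y: "y \<in> X" "\<And>\<epsilon>. \<epsilon> > 0 \<Longrightarrow> \<exists>xs. periodic_pseudo_orbit X f \<epsilon> xs \<and> x \<in> range xs \<and> y \<in> range xs"
    unfolding chain_class_def by auto
  have "chainR X f x y \<and> chainR X f y x" unfolding chainR_def
  proof (intro conjI allI impI)
    fix \<epsilon> :: real assume "\<epsilon> > 0"
    then obtain xs a b where "periodic_pseudo_orbit X f \<epsilon> xs" "x = xs a" "y = xs b" using y(2) by blast
    then show "\<exists>p n. n > 0 \<and> finite_pseudo_orbit X f \<epsilon> p n \<and> p 0 = x \<and> p n = y"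
      "\<exists>p n. n > 0 \<and> finite_pseudo_orbit X f \<epsilon> p n \<and> p 0 = y \<and> p n = x"
      using periodic_chain[of X f \<epsilon> xs a b] periodic_chain[of X f \<epsilon> xs b a] by simp_all
  qed
  then show "y \<in> {y. chainR X f x y \<and> chainR X f y x}" by simp
next
  fix y assume "y \<in> {y. chainR X f x y \<and> chainR X f y x}"
  then have c: "chainR X f x y" "chainR X f y x" by auto
  have "\<exists>xs. periodic_pseudo_orbit X f \<epsilon> xs \<and> x \<in> range xs \<and> y \<in> range xs" if e: "\<epsilon> > 0" for \<epsilon>
  proof -
    obtain p n where p: "n > 0" "finite_pseudo_orbit X f \<epsilon> p n" "p 0 = x" "p n = y"
      using c(1) e unfolding chainR_def by blast
    obtain q m where q: "m > 0" "finite_pseudo_orbit X f \<epsilon> q m" "q 0 = y" "q m = x"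
      using c(2) e unfolding chainR_def by blast
    define r where "r = (\<lambda>i. if i \<le> n then p i else q (i - n))"
    define L where "L = n + m"
    have r: "finite_pseudo_orbit X f \<epsilon> r L" unfolding r_def L_def using fpo_concat[OF p(2) q(2)] p q by simp
    have r0: "r 0 = x" "r L = x" "r n = y" unfolding r_def L_def using p q by auto
    have L0: "L > 0" "n < L" unfolding L_def using p q by auto
    define xs where "xs k = r (nat (k mod int L))" for k
    have modb: "0 \<le> k mod int L" "k mod int L < int L" for k using L0 by simp_all
    have rX: "\<And>i. i \<le> L \<Longrightarrow> r i \<in> X" and rd: "\<And>i. i < L \<Longrightarrow> dist (f (r i)) (r (Suc i)) < \<epsilon>"
      using r unfolding finite_pseudo_orbit_def by auto
    have "pseudo_orbit X f \<epsilon> xs" unfolding pseudo_orbit_def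
    proof (intro conjI allI)
      fix k
      define i where "i = nat (k mod int L)"
      have ii: "int i = k mod int L" unfolding i_def using modb[of k] by simp
      have iL: "i < L" using ii modb[of k] by linarith
      have xk: "xs k = r i" unfolding xs_def i_def by simp
      show "xs k \<in> X" using xk rX iL by simp
      have e1: "(k + 1) mod int L = (int i + 1) mod int L" unfolding ii by (simp add: mod_add_left_eq)
      have "xs (k + 1) = r (Suc i)"
      proof (cases "Suc i < L")
        case True
        then have "(int i + 1) mod int L = int i + 1" by (intro mod_pos_pos_trivial) auto
        then have "nat ((k+1) mod int L) = Suc i" using e1 by simp
        then show ?thesis unfolding xs_def by simp
      next
        case False
        then have "Suc i = L" using iL by simp
        then have "int i + 1 = int L" by simp
        then have "(int i + 1) mod int L = 0" by simp
        then have "nat ((k+1) mod int L) = 0" using e1 by simp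
        then show ?thesis unfolding xs_def using r0 \<open>Suc i = L\<close> by simp
      qed
      then show "dist (f (xs k)) (xs (k + 1)) < \<epsilon>" using xk rd[OF iL] by simp
    qed
    moreover have "\<forall>k. xs (k + int L) = xs k" unfolding xs_def by simp
    moreover have "xs 0 = x" unfolding xs_def using r0 by simp
    moreover have "xs (int n) = y" unfolding xs_def using r0 L0 by simp
    ultimately have "periodic_pseudo_orbit X f \<epsilon> xs" unfolding periodic_pseudo_orbit_def using L0 by (intro conjI exI[of _ "int L"]) simp_all
    moreover have "x \<in> range xs" "y \<in> range xs" using \<open>xs 0 = x\<close> \<open>xs (int n) = y\<close> by (metis rangeI)+
    ultimately show ?thesis by blast
  qed
  then show "y \<in> chain_class X f x" unfolding chain_class_def using chainR_X[OF c(1)] by simp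
qed

lemma class_eq:
  assumes "chainR X f x y" "chainR X f y x"
  shows "chain_class X f x = chain_class X f y"
  unfolding class_char
proof (rule Collect_cong)
  fix z
  show "(chainR X f x z \<and> chainR X f z x) = (chainR X f y z \<and> chainR X f z y)"
    using chainR_trans[OF assms(2), of z] chainR_trans[OF assms(1), of z]
      chainR_trans[of X f z x y] chainR_trans[of X f z y x] assms by blast
qed

definition nxt :: "(nat \<Rightarrow> nat) \<Rightarrow> nat \<times> nat \<Rightarrow> nat \<times> nat" where
  "nxt n s = (if Suc (snd s) < n (fst s) then (fst s, Suc (snd s)) else (Suc (fst s), 0))"

primrec st :: "(nat \<Rightarrow> nat) \<Rightarrow> nat \<Rightarrow> nat \<times> nat" where
  "st n 0 = (0, 0)"
| "st n (Suc N) = nxt n (st n N)"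

definition cc :: "(nat \<Rightarrow> nat \<Rightarrow> 'a) \<Rightarrow> (nat \<Rightarrow> nat) \<Rightarrow> nat \<Rightarrow> 'a" where
  "cc h n N = h (fst (st n N)) (snd (st n N))"

lemma st_inv: assumes "\<And>m. n m > 0" shows "snd (st n N) < n (fst (st n N))"
proof (induction N)
  case 0 then show ?case using assms by simp
next
  case (Suc N) then show ?case using assms by (simp add: nxt_def)
qed

lemma st_mono: "incseq (\<lambda>N. fst (st n N))"
  by (rule incseq_SucI) (simp add: nxt_def)

lemma st_block:
  assumes "\<And>m. n m > 0"
  shows "st n (sum n {..<m}) = (m, 0)"
proof (induction m)
  case 0 then show ?case by simp
next
  case (Suc m)
  have inner: "st n (sum n {..<m} + i) = (m, i)" if "i < n m" for i
    using that
  proof (induction i)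
    case 0 then show ?case using Suc.IH by simp
  next
    case (Suc i)
    then have "st n (sum n {..<m} + i) = (m, i)" by simp
    then show ?case using Suc.prems by (simp add: nxt_def)
  qed
  have "n m - 1 < n m" using assms[of m] by simp
  then have s: "st n (sum n {..<m} + (n m - 1)) = (m, n m - 1)" by (rule inner)
  have eq: "sum n {..<Suc m} = Suc (sum n {..<m} + (n m - 1))" using assms[of m] by simp
  have "st n (sum n {..<Suc m}) = nxt n (st n (sum n {..<m} + (n m - 1)))" by (simp only: eq st.simps)
  also have "\<dots> = nxt n (m, n m - 1)" by (simp only: s)
  also have "\<dots> = (Suc m, 0)" using assms[of m] by (simp add: nxt_def)
  finally show ?case .
qed

lemma sum_ge: fixes n :: "nat \<Rightarrow> nat" and m :: nat assumes "\<And>m. n m > 0" shows "m \<le> sum n {..<m}"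
proof (induction m)
  case 0 then show ?case by simp
next
  case (Suc m) then show ?case using assms[of m] by simp
qed

lemma st_top:
  assumes "\<And>m. n m > 0"
  shows "filterlim (\<lambda>N. fst (st n N)) at_top sequentially"
  unfolding filterlim_at_top
proof
  fix Z :: nat
  show "eventually (\<lambda>N. Z \<le> fst (st n N)) sequentially"
  proof (rule eventually_sequentiallyI[of "sum n {..<Z}"])
    fix N assume "sum n {..<Z} \<le> N"
    then have "fst (st n (sum n {..<Z})) \<le> fst (st n N)" using st_mono[of n] by (simp add: incseq_def)
    then show "Z \<le> fst (st n N)" using st_block[of n Z, OF assms] by simp
  qed
qed

lemma cc_succ:
  assumes "\<And>m. n m > 0" "\<And>m. h (Suc m) 0 = h m (n m)"
  shows "cc h n (Suc N) = h (fst (st n N)) (Suc (snd (st n N)))"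
proof -
  have i: "snd (st n N) < n (fst (st n N))" by (rule st_inv[OF assms(1)])
  show ?thesis
  proof (cases "Suc (snd (st n N)) < n (fst (st n N))")
    case True then show ?thesis unfolding cc_def by (simp add: nxt_def)
  next
    case False
    then have "Suc (snd (st n N)) = n (fst (st n N))" using i by simp
    then show ?thesis unfolding cc_def using False assms(2) by (simp add: nxt_def)
  qed
qed

lemma tendsto_nat_top: "(u \<longlongrightarrow> (0::real)) sequentially \<Longrightarrow> ((\<lambda>k::int. u (nat k)) \<longlongrightarrow> 0) at_top"
  by (rule filterlim_compose[OF _ filterlim_nat_sequentially])

lemma tendsto_nat_bot: "(u \<longlongrightarrow> (0::real)) sequentially \<Longrightarrow> ((\<lambda>k::int. u (nat (-k-1))) \<longlongrightarrow> 0) at_bot"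
proof -
  assume u: "(u \<longlongrightarrow> (0::real)) sequentially"
  have "filterlim (\<lambda>k::int. nat (-k-1)) sequentially at_bot"
    unfolding filterlim_at_top
  proof
    fix Z :: nat
    show "eventually (\<lambda>k::int. Z \<le> nat (-k-1)) at_bot"
      by (rule eventually_at_bot_linorderI[of "- int Z - 1"]) simp
  qed
  then show ?thesis by (rule filterlim_compose[OF u])
qed

lemma CR_loops:
  assumes "chain_recurrent X f x" "\<And>m::nat. e m > 0"
  shows "\<exists>P N. \<forall>m. N m > 0 \<and> finite_pseudo_orbit X f (e m) (P m) (N m) \<and> P m 0 = x \<and> P m (N m) = x"
proof -
  have "\<forall>m. \<exists>p n. n > 0 \<and> finite_pseudo_orbit X f (e m) p n \<and> p 0 = x \<and> p n = x"
    using assms unfolding chain_recurrent_def by simp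
  then obtain P where "\<forall>m. \<exists>n. n > 0 \<and> finite_pseudo_orbit X f (e m) (P m) n \<and> P m 0 = x \<and> P m n = x"
    by (rule choice[THEN exE]) blast
  then obtain N where "\<forall>m. N m > 0 \<and> finite_pseudo_orbit X f (e m) (P m) (N m) \<and> P m 0 = x \<and> P m (N m) = x"
    by (rule choice[THEN exE]) blast
  then show ?thesis by blast
qed

lemma close_chain:
  assumes hom: "homeomorphism X X f g"
    and d0: "\<delta> > 0"
    and dL: "\<And>xs. pseudo_orbit X f \<delta> xs \<Longrightarrow> two_sided_limit_pseudo_orbit X f xs \<Longrightarrow>
     (\<exists>z\<in>X. eps_shadows f g \<epsilon> z xs \<and> limit_shadows f g z xs)"
    and cx: "chain_recurrent X f x" and cy: "chain_recurrent X f y"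
    and dxy: "dist x y < \<delta>/2"
  shows "chainR X f x y"
proof -
  have xX: "x \<in> X" and yX: "y \<in> X" using cx cy unfolding chain_recurrent_def by simp_all
  define e where "e m = \<delta>/2 * inverse (real (Suc m))" for m :: nat
  have e0: "e m > 0" for m unfolding e_def using d0 by simp
  have e1: "e m \<le> \<delta>/2" for m
  proof -
    have "inverse (real (Suc m)) \<le> inverse 1" by (rule le_imp_inverse_le) simp_all
    then have "inverse (real (Suc m)) \<le> 1" by simp
    then show ?thesis unfolding e_def using d0 by (intro mult_left_le) simp_all
  qed
  have elim: "e \<longlonglongrightarrow> 0"
  proof -
    have "(\<lambda>m. \<delta>/2 * inverse (real (Suc m))) \<longlonglongrightarrow> \<delta>/2 * 0"
      by (intro tendsto_mult tendsto_const LIMSEQ_inverse_real_of_nat)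
    then show ?thesis unfolding e_def by simp
  qed
  obtain P Nx where Pxall: "\<forall>m. Nx m > 0 \<and> finite_pseudo_orbit X f (e m) (P m) (Nx m) \<and> P m 0 = x \<and> P m (Nx m) = x"
    using CR_loops[of X f x e, OF cx e0] by blast
  have Px: "\<And>m. Nx m > 0" "\<And>m. finite_pseudo_orbit X f (e m) (P m) (Nx m)" "\<And>m. P m 0 = x" "\<And>m. P m (Nx m) = x"
    using Pxall by simp_all
  obtain Q Ny where Qyall: "\<forall>m. Ny m > 0 \<and> finite_pseudo_orbit X f (e m) (Q m) (Ny m) \<and> Q m 0 = y \<and> Q m (Ny m) = y"
    using CR_loops[of X f y e, OF cy e0] by blast
  have Qy: "\<And>m. Ny m > 0" "\<And>m. finite_pseudo_orbit X f (e m) (Q m) (Ny m)" "\<And>m. Q m 0 = y" "\<And>m. Q m (Ny m) = y"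
    using Qyall by simp_all
  define hB where "hB m i = P m (Nx m - i)" for m i
  define B where "B = cc hB Nx"
  define Fw where "Fw = cc Q Ny"
  have hB_jn: "hB (Suc m) 0 = hB m (Nx m)" for m unfolding hB_def using Px by simp
  have Q_jn: "Q (Suc m) 0 = Q m (Ny m)" for m using Qy by simp
  have PX: "P m i \<in> X" if "i \<le> Nx m" for m i using Px(2)[of m] that unfolding finite_pseudo_orbit_def by simp
  have QX: "Q m i \<in> X" if "i \<le> Ny m" for m i using Qy(2)[of m] that unfolding finite_pseudo_orbit_def by simp
  have BX: "B N \<in> X" for N
    unfolding B_def cc_def hB_def by (rule PX) simp
  have FX: "Fw N \<in> X" for N
    unfolding Fw_def cc_def using st_inv[of Ny N, OF Qy(1)] by (intro QX) simp
  have B_step: "dist (f (B (Suc N))) (B N) < e (fst (st Nx N))" for N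
  proof -
    define m where "m = fst (st Nx N)"
    define i where "i = snd (st Nx N)"
    have iN: "i < Nx m" unfolding m_def i_def by (rule st_inv[OF Px(1)])
    have b1: "B (Suc N) = P m (Nx m - Suc i)" unfolding B_def cc_succ[of Nx hB, OF Px(1) hB_jn]
      unfolding hB_def m_def i_def by simp
    have b0: "B N = P m (Suc (Nx m - Suc i))" unfolding B_def cc_def hB_def m_def[symmetric] i_def[symmetric]
      using iN by (simp add: Suc_diff_Suc)
    have "Nx m - Suc i < Nx m" using iN by simp
    then have "dist (f (P m (Nx m - Suc i))) (P m (Suc (Nx m - Suc i))) < e m"
      using Px(2)[of m] unfolding finite_pseudo_orbit_def by simp
    then show ?thesis using b1 b0 m_def by simp
  qed
  have F_step: "dist (f (Fw N)) (Fw (Suc N)) < e (fst (st Ny N))" for N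
  proof -
    define m where "m = fst (st Ny N)"
    define i where "i = snd (st Ny N)"
    have iN: "i < Ny m" unfolding m_def i_def by (rule st_inv[OF Qy(1)])
    have b1: "Fw (Suc N) = Q m (Suc i)" unfolding Fw_def cc_succ[of Ny Q, OF Qy(1) Q_jn]
      unfolding m_def i_def by simp
    have b0: "Fw N = Q m i" unfolding Fw_def cc_def m_def i_def by simp
    have "dist (f (Q m i)) (Q m (Suc i)) < e m"
      using Qy(2)[of m] iN unfolding finite_pseudo_orbit_def by simp
    then show ?thesis using b1 b0 m_def by simp
  qed
  have B0: "B 0 = x" unfolding B_def cc_def hB_def using Px by simp
  have F0: "Fw 0 = y" unfolding Fw_def cc_def using Qy by simp
  have BS: "B (sum Nx {..<m}) = x" for m unfolding B_def cc_def st_block[of Nx m, OF Px(1)] hB_def using Px by simp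
  have FS: "Fw (sum Ny {..<m}) = y" for m unfolding Fw_def cc_def st_block[of Ny m, OF Qy(1)] using Qy by simp
  define xs where "xs k = (if k \<ge> 0 then Fw (nat k) else B (nat (-k)))" for k :: int
  have xsX: "xs k \<in> X" for k unfolding xs_def using BX FX by simp
  have xs_pos: "dist (f (xs k)) (xs (k+1)) = dist (f (Fw (nat k))) (Fw (Suc (nat k)))" if "k \<ge> 0" for k
  proof -
    have "nat (k+1) = Suc (nat k)" using that by simp
    then show ?thesis unfolding xs_def using that by simp
  qed
  have xs_neg: "dist (f (xs k)) (xs (k+1)) = dist (f (B (Suc (nat (-k-1))))) (B (nat (-k-1)))" if "k \<le> -2" for k
  proof -
    have "nat (-k) = Suc (nat (-k-1))" "nat (-(k+1)) = nat (-k-1)" using that by simp_all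
    then show ?thesis unfolding xs_def using that by simp
  qed
  have xs_m1: "xs (-1) = B 1" "xs 0 = y" unfolding xs_def using F0 by simp_all
  have po: "pseudo_orbit X f \<delta> xs" unfolding pseudo_orbit_def
  proof (intro conjI allI)
    fix k show "xs k \<in> X" by (rule xsX)
    consider "k \<ge> 0" | "k = -1" | "k \<le> -2" by linarith
    then show "dist (f (xs k)) (xs (k+1)) < \<delta>"
    proof cases
      case 1 then show ?thesis using xs_pos[OF 1] F_step[of "nat k"] e1[of "fst (st Ny (nat k))"] d0 by linarith
    next
      case 2
      have "dist (f (B (Suc 0))) (B 0) < \<delta>/2" using B_step[of 0] e1[of "fst (st Nx 0)"] by simp
      then have "dist (f (B 1)) y \<le> dist (f (B 1)) x + dist x y" using B0 dist_triangle by simp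
      also have "\<dots> < \<delta>" using \<open>dist (f (B (Suc 0))) (B 0) < \<delta>/2\<close> B0 dxy by simp
      finally show ?thesis using 2 xs_m1 by simp
    next
      case 3 then show ?thesis using xs_neg[OF 3] B_step[of "nat (-k-1)"] e1[of "fst (st Nx (nat (-k-1)))"] d0 by linarith
    qed
  qed
  have eF: "(\<lambda>N. dist (f (Fw N)) (Fw (Suc N))) \<longlonglongrightarrow> 0"
  proof (rule tendsto_sandwich[of "\<lambda>_. 0" _ _ "\<lambda>N. e (fst (st Ny N))"])
    show "eventually (\<lambda>N. 0 \<le> dist (f (Fw N)) (Fw (Suc N))) sequentially" by simp
    show "eventually (\<lambda>N. dist (f (Fw N)) (Fw (Suc N)) \<le> e (fst (st Ny N))) sequentially"
      using F_step by (simp add: less_imp_le)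
    show "(\<lambda>N. e (fst (st Ny N))) \<longlonglongrightarrow> 0" by (rule filterlim_compose[OF elim st_top[OF Qy(1)]])
  qed simp
  have eB: "(\<lambda>N. dist (f (B (Suc N))) (B N)) \<longlonglongrightarrow> 0"
  proof (rule tendsto_sandwich[of "\<lambda>_. 0" _ _ "\<lambda>N. e (fst (st Nx N))"])
    show "eventually (\<lambda>N. 0 \<le> dist (f (B (Suc N))) (B N)) sequentially" by simp
    show "eventually (\<lambda>N. dist (f (B (Suc N))) (B N) \<le> e (fst (st Nx N))) sequentially"
      using B_step by (simp add: less_imp_le)
    show "(\<lambda>N. e (fst (st Nx N))) \<longlonglongrightarrow> 0" by (rule filterlim_compose[OF elim st_top[OF Px(1)]])
  qed simp
  have lim: "two_sided_limit_pseudo_orbit X f xs" unfolding two_sided_limit_pseudo_orbit_def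
  proof (intro conjI allI)
    fix k show "xs k \<in> X" by (rule xsX)
  next
    have t: "((\<lambda>k::int. dist (f (Fw (nat k))) (Fw (Suc (nat k)))) \<longlongrightarrow> 0) at_top"
      by (rule tendsto_nat_top[OF eF])
    have "eventually (\<lambda>k. dist (f (Fw (nat k))) (Fw (Suc (nat k))) = dist (f (xs k)) (xs (k+1))) at_top"
      using eventually_ge_at_top[of "0::int"] by eventually_elim (simp add: xs_pos)
    then show "((\<lambda>k. dist (f (xs k)) (xs (k+1))) \<longlongrightarrow> 0) at_top" using t by (rule tendsto_cong[THEN iffD1])
  next
    have t: "((\<lambda>k::int. dist (f (B (Suc (nat (-k-1))))) (B (nat (-k-1)))) \<longlongrightarrow> 0) at_bot"
      by (rule tendsto_nat_bot[OF eB])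
    have "eventually (\<lambda>k. dist (f (B (Suc (nat (-k-1))))) (B (nat (-k-1))) = dist (f (xs k)) (xs (k+1))) at_bot"
      by (rule eventually_at_bot_linorderI[of "-2"]) (simp add: xs_neg)
    then show "((\<lambda>k. dist (f (xs k)) (xs (k+1))) \<longlongrightarrow> 0) at_bot" using t by (rule tendsto_cong[THEN iffD1])
  qed
  obtain z where zX: "z \<in> X" and zl: "limit_shadows f g z xs" using dL[OF po lim] by blast
  have ztop: "((\<lambda>k. dist (iter_int f g k z) (xs k)) \<longlongrightarrow> 0) at_top"
    and zbot: "((\<lambda>k. dist (iter_int f g k z) (xs k)) \<longlongrightarrow> 0) at_bot"
    using zl unfolding limit_shadows_def by simp_all
  show ?thesis unfolding chainR_def
  proof (intro allI impI)
    fix \<eta> :: real assume eta: "\<eta> > 0"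
    have fc: "continuous_on X f" using hom unfolding homeomorphism_def by simp
    obtain \<rho> where rho: "\<rho> > 0" "\<And>w. w \<in> X \<Longrightarrow> dist w x < \<rho> \<Longrightarrow> dist (f w) (f x) < \<eta>"
      using fc xX eta unfolding continuous_on_iff by metis
    have "eventually (\<lambda>k. dist (iter_int f g k z) (xs k) < \<rho>) at_bot"
      by (rule order_tendstoD(2)[OF zbot rho(1)])
    then obtain K1 where K1: "\<And>k. k \<le> K1 \<Longrightarrow> dist (iter_int f g k z) (xs k) < \<rho>"
      unfolding eventually_at_bot_linorder by blast
    have "eventually (\<lambda>k. dist (iter_int f g k z) (xs k) < \<eta>) at_top"
      by (rule order_tendstoD(2)[OF ztop eta])
    then obtain K2 where K2: "\<And>k. k \<ge> K2 \<Longrightarrow> dist (iter_int f g k z) (xs k) < \<eta>"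
      unfolding eventually_at_top_linorder by blast
    define m1 where "m1 = Suc (nat \<bar>K1\<bar>)"
    define m2 where "m2 = Suc (nat \<bar>K2\<bar>)"
    define s where "s = - int (sum Nx {..<m1})"
    define t where "t = int (sum Ny {..<m2})"
    have s1: "s \<le> -1" "s \<le> K1" using sum_ge[of Nx m1, OF Px(1)] unfolding s_def m1_def by linarith+
    have t1: "t \<ge> 1" "t \<ge> K2" using sum_ge[of Ny m2, OF Qy(1)] unfolding t_def m2_def by linarith+
    have ns: "nat (-s) = sum Nx {..<m1}" unfolding s_def by (simp only: minus_minus nat_int)
    have xs_s: "xs s = x" unfolding xs_def using BS[of m1] s1 ns by simp
    have nt: "nat t = sum Ny {..<m2}" unfolding t_def by (simp only: nat_int)
    have xs_t: "xs t = y" unfolding xs_def using FS[of m2] t1 nt by simp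
    define n where "n = nat (t - s)"
    have n2: "n \<ge> 2" "int n = t - s" unfolding n_def using s1 t1 by simp_all
    define p where "p i = (if i = 0 then x else if i = n then y else iter_int f g (s + int i) z)" for i
    have itX: "iter_int f g k z \<in> X" for k by (rule iter_in[OF hom zX])
    have "finite_pseudo_orbit X f \<eta> p n" unfolding finite_pseudo_orbit_def
    proof (intro conjI allI impI)
      fix i show "p i \<in> X" unfolding p_def using xX yX itX by simp
    next
      fix i assume i: "i < n"
      consider "i = 0" | "i > 0" "Suc i < n" | "i > 0" "Suc i = n" using i n2 by linarith
      then show "dist (f (p i)) (p (Suc i)) < \<eta>"
      proof cases
        case 1
        then have pp: "p i = x" "p (Suc i) = iter_int f g (s + 1) z" unfolding p_def using n2 by simp_all
        have "dist (iter_int f g s z) x < \<rho>" using K1[OF s1(2)] xs_s by simp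
        then have "dist (f (iter_int f g s z)) (f x) < \<eta>" using rho(2) itX by simp
        then show ?thesis using pp iter_succ[OF hom zX, of s] by (simp add: dist_commute)
      next
        case 2
        then have "p i = iter_int f g (s + int i) z" "p (Suc i) = iter_int f g (s + int i + 1) z"
          unfolding p_def by (simp_all add: algebra_simps)
        then show ?thesis using iter_succ[OF hom zX, of "s + int i"] eta by simp
      next
        case 3
        then have "p i = iter_int f g (s + int i) z" "p (Suc i) = y" "s + int i + 1 = t"
          unfolding p_def using n2 by simp_all
        moreover have "dist (iter_int f g t z) y < \<eta>" using K2[OF t1(2)] xs_t by simp
        ultimately show ?thesis using iter_succ[OF hom zX, of "s + int i"] by simp
      qed
    qed
    moreover have "p 0 = x" "p n = y" unfolding p_def using n2 by simp_all
    moreover have "n > 0" using n2 by simp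
    ultimately show "\<exists>p n. n > 0 \<and> finite_pseudo_orbit X f \<eta> p n \<and> p 0 = x \<and> p n = y"
      by (intro exI[of _ p] exI[of _ n] conjI)
  qed
qed

theorem proposition3p1:
  fixes X :: "'a::metric_space set" and f g :: "'a \<Rightarrow> 'a"
  assumes "compact X"
    and "homeomorphism X X f g"
    and "L_shadowing X f g"
  shows "shadowing X f g \<and> finite (chain_recurrent_classes X f)"
proof
  show "shadowing X f g" by (rule L_imp_shadowing[OF assms])
  obtain \<delta> where d0: "\<delta> > 0" and dL: "\<And>xs. pseudo_orbit X f \<delta> xs \<Longrightarrow> two_sided_limit_pseudo_orbit X f xs \<Longrightarrow>
     (\<exists>z\<in>X. eps_shadows f g 1 z xs \<and> limit_shadows f g z xs)"
    using assms(3)[unfolded L_shadowing_def, rule_format, of 1] by auto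
  have close: "chain_class X f x = chain_class X f y"
    if cxy: "chain_recurrent X f x" "chain_recurrent X f y" "dist x y < \<delta>/2" for x y
  proof (rule class_eq)
    show "chainR X f x y" by (rule close_chain[OF assms(2) d0 dL cxy])
    have dyx: "dist y x < \<delta>/2" using cxy(3) by (simp add: dist_commute)
    show "chainR X f y x" by (rule close_chain[OF assms(2) d0 dL cxy(2) cxy(1) dyx])
  qed
  have "\<delta>/4 > 0" using d0 by simp
  then obtain K where K: "finite K" "K \<subseteq> X" "X \<subseteq> (\<Union>c\<in>K. ball c (\<delta>/4))"
    using seq_compact_imp_totally_bounded[OF compact_imp_seq_compact[OF assms(1)], rule_format, OF \<open>\<delta>/4 > 0\<close>] by (elim exE conjE) (rule that)
  define pick where "pick c = (SOME x. chain_recurrent X f x \<and> x \<in> ball c (\<delta>/4))" for c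
  have "chain_recurrent_classes X f \<subseteq> (\<lambda>c. chain_class X f (pick c)) ` K"
  proof
    fix C assume "C \<in> chain_recurrent_classes X f"
    then obtain x where x: "chain_recurrent X f x" "C = chain_class X f x"
      unfolding chain_recurrent_classes_def by blast
    have "x \<in> X" using x(1) unfolding chain_recurrent_def by simp
    then obtain c where c: "c \<in> K" "x \<in> ball c (\<delta>/4)" using K(3) by blast
    have "\<exists>w. chain_recurrent X f w \<and> w \<in> ball c (\<delta>/4)" using x(1) c(2) by blast
    then have pc: "chain_recurrent X f (pick c) \<and> pick c \<in> ball c (\<delta>/4)"
      unfolding pick_def by (rule someI_ex)
    have "dist (pick c) x \<le> dist (pick c) c + dist c x" by (rule dist_triangle)
    also have "\<dots> < \<delta>/2" using pc c(2) by (simp add: dist_commute)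
    finally have "chain_class X f (pick c) = chain_class X f x" using close pc x(1) by simp
    then show "C \<in> (\<lambda>c. chain_class X f (pick c)) ` K" using c(1) x(2) by auto
  qed
  then show "finite (chain_recurrent_classes X f)" using K(1) by (rule finite_subset[OF _ finite_imageI])
qed

end
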